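(* Let $c=2-\sqrt2$ and define $f:[0,c]\to\mathbb{R}$ by $$f(x)=\tfrac12\big(\ln(1-x)+\ln(1-c+x)\big)+\frac{1}{\sqrt2\,(x-1)}+\frac{2+\sqrt2-\ln(1-c)}{2}.$$ Then $f$ is a strictly decreasing bijection from $[0,c]$ onto $[0,1]$ with $f(0)=1$ and $f(c)=0$. Let $\tau=f^{-1}:[0,1]\to[0,c]$ and $h:[0,1]\to[0,1]$, $h(x)=f(c-f^{-1}(x))$ (so $h$ is decreasing with $h(0)=1$, $h(1)=0$). Then for all $x\in[0,1]$, $$\int_0^x\frac{1-\tau(y)}{1-y+h(y)}\,dy=c-\tau(x),\qquad \int_0^1\tau(y)\,dy=1-c,\qquad \int_0^1\frac{1}{1-y+h(y)}\,dy<1.$$ *)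

theory Defs
  imports "HOL-Analysis.Analysis"
begin

definition cc :: real where
  "cc = 2 - sqrt 2"

definition ff :: "real \<Rightarrow> real" where
  "ff x = (ln (1 - x) + ln (1 - cc + x)) / 2 + 1 / (sqrt 2 * (x - 1))
          + (2 + sqrt 2 - ln (1 - cc)) / 2"

definition tau :: "real \<Rightarrow> real" where
  "tau = inv_into {0..cc} ff"

definition hh :: "real \<Rightarrow> real" where
  "hh y = ff (cc - tau y)"

end

theory Submission
  imports Defs
begin


lemma s2b: "1.41 < sqrt (2::real)" "sqrt (2::real) < 1.42"
proof -
  show "1.41 < sqrt (2::real)" by (rule real_less_rsqrt) (simp add: power2_eq_square)
  have "sqrt (2::real) < sqrt (1.42^2)" by (rule real_sqrt_less_mono) (simp add: power2_eq_square)
  then show "sqrt (2::real) < 1.42" by simp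
qed

lemma cc_bounds: "0 < cc" "cc < 1" "1 - cc = sqrt 2 - 1"
  using s2b by (auto simp: cc_def)

definition fd :: "real \<Rightarrow> real" where
  "fd x = - x * (2 - x) / ((1 - x)^2 * (1 - cc + x))"

lemma alg: fixes A s :: real assumes s: "s * s = 2" and "A \<noteq> 0" "s - A \<noteq> 0"
  shows "(-1/A + 1/(s-A))/2 + (-s/(2*A^2)) + 0 = -(1-A)*(2-(1-A))/(A^2*(s-A))"
proof -
  have "(-1/A + 1/(s-A))/2 + (-s/(2*A^2)) + 0 = (-(s-A)*A + A*A - s*(s-A))/(2*(A*A)*(s-A))"
    using assms(2,3) by (simp add: field_simps power2_eq_square)
  also have "-(s-A)*A + A*A - s*(s-A) = 2*(A*A - 1)" using s by (simp add: algebra_simps)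
  also have "2*(A*A - 1)/(2*(A*A)*(s-A)) = -(1-A)*(2-(1-A))/(A^2*(s-A))"
    using assms by (simp add: field_simps power2_eq_square)
  finally show ?thesis .
qed
lemma algc: fixes s :: real assumes s: "s * s = 2" shows "(s - 2) * (-1 - s/2) = 1"
proof -
  have "(s - 2) * (-1 - s/2) = (4 - s * s)/2" by (simp add: field_simps algebra_simps)
  then show ?thesis using s by simp
qed

lemma ff_deriv:
  assumes "cc - 1 < x" "x < 1"
  shows "(ff has_real_derivative fd x) (at x)"
proof -
  have p1: "1 - x > 0" and p2: "1 - cc + x > 0" using assms by auto
  have d1: "((\<lambda>x. ln (1 - x)) has_real_derivative (-1/(1-x))) (at x)"
    using p1 by (auto intro!: derivative_eq_intros)
  have d2: "((\<lambda>x. ln (1 - cc + x)) has_real_derivative (1/(1-cc+x))) (at x)"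
    using p2 by (auto intro!: derivative_eq_intros)
  have d3: "((\<lambda>x. 1 / (sqrt 2 * (x - 1))) has_real_derivative (- sqrt 2/(2 * (1-x)^2))) (at x)"
    using p1 by (auto intro!: derivative_eq_intros simp: power2_eq_square field_simps)
  have "(ff has_real_derivative ((-1/(1-x) + 1/(1-cc+x))/2 + (- sqrt 2/(2 * (1-x)^2)) + 0)) (at x)"
    unfolding ff_def[abs_def]
    by (intro DERIV_add DERIV_cdivide d1 d2 d3 DERIV_const)
  moreover have "((-1/(1-x) + 1/(1-cc+x))/2 + (- sqrt 2/(2 * (1-x)^2)) + 0) = fd x"
  proof -
    have e: "sqrt 2 - (1 - x) = 1 - cc + x" by (auto simp: cc_def)
    show ?thesis using alg[of "sqrt 2" "1-x"] p1 p2 unfolding fd_def e by simp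
  qed
  ultimately show ?thesis by simp
qed

lemma ff0: "ff 0 = 1"
proof -
  have s: "sqrt 2 * sqrt 2 = (2::real)" by simp
  have "1 / (sqrt 2 * (0 - 1)) = - sqrt 2 / (2::real)" using s
    by (simp add: field_simps)
  then show ?thesis unfolding ff_def by (simp add: field_simps)
qed

lemma ffc: "ff cc = 0"
proof -
  have s: "sqrt 2 * sqrt 2 = (2::real)" by simp
  have e: "sqrt 2 * (cc - 1) = sqrt 2 - 2" unfolding cc_def by (simp add: algebra_simps)
  have ne: "sqrt 2 - 2 \<noteq> (0::real)" using s2b by simp
  have "- 1 - sqrt 2 / 2 = 1 / (sqrt 2 - (2::real))"
    using algc[OF s] ne by (simp add: eq_divide_eq mult.commute)
  then have "1 / (sqrt 2 * (cc - 1)) = - 1 - sqrt 2 / 2" using e by simp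
  then show ?thesis unfolding ff_def by (simp add: field_simps)
qed

lemma fd_neg: "0 < x \<Longrightarrow> x < 1 \<Longrightarrow> fd x < 0"
  unfolding fd_def using cc_bounds
  by (intro divide_neg_pos) (auto intro!: mult_pos_pos)

lemma ff_strict: assumes "0 \<le> x" "x < y" "y \<le> cc" shows "ff y < ff x"
proof -
  have "\<And>z. x \<le> z \<Longrightarrow> z \<le> y \<Longrightarrow> (ff has_real_derivative fd z) (at z)"
    using assms cc_bounds by (intro ff_deriv) auto
  from MVT2[OF assms(2) this] obtain z where z: "x < z" "z < y" "ff y - ff x = (y - x) * fd z"
    by blast
  have "fd z < 0" using z assms cc_bounds by (intro fd_neg) auto
  then have "(y - x) * fd z < 0" using assms by (simp add: mult_pos_neg)
  then show ?thesis using z by simp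
qed

lemma ff_cont: "continuous_on {0..cc} ff"
proof (rule continuous_at_imp_continuous_on, rule ballI)
  fix x assume "x \<in> {0..cc}"
  then have "(ff has_real_derivative fd x) (at x)" using cc_bounds by (intro ff_deriv) auto
  then show "isCont ff x" by (rule DERIV_isCont)
qed

lemma ff_img: "ff ` {0..cc} = {0..1}"
proof
  show "ff ` {0..cc} \<subseteq> {0..1}"
  proof
    fix y assume "y \<in> ff ` {0..cc}"
    then obtain x where x: "x \<in> {0..cc}" "y = ff x" by auto
    have "ff cc \<le> ff x" using ff_strict[of x cc] x by (cases "x = cc") auto
    moreover have "ff x \<le> ff 0" using ff_strict[of 0 x] x by (cases "x = 0") auto
    ultimately show "y \<in> {0..1}" using x ff0 ffc by auto
  qed
  show "{0..1} \<subseteq> ff ` {0..cc}"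
  proof
    fix y :: real assume y: "y \<in> {0..1}"
    from IVT2'[of ff cc y 0, OF _ _ _ ff_cont] y ff0 ffc cc_bounds
    obtain x where "0 \<le> x" "x \<le> cc" "ff x = y" by auto
    then show "y \<in> ff ` {0..cc}" by auto
  qed
qed

lemma ff_inj: "inj_on ff {0..cc}"
proof (rule inj_onI)
  fix x y assume "x \<in> {0..cc}" "y \<in> {0..cc}" "ff x = ff y"
  then show "x = y" using ff_strict[of x y] ff_strict[of y x]
    by (cases x y rule: linorder_cases) auto
qed

lemma ff_bij: "bij_betw ff {0..cc} {0..1}"
  using ff_inj ff_img by (simp add: bij_betw_def)

lemma tau_in: "y \<in> {0..1} \<Longrightarrow> tau y \<in> {0..cc}"
  unfolding tau_def using ff_img by (metis inv_into_into)

lemma ff_tau: "y \<in> {0..1} \<Longrightarrow> ff (tau y) = y"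
  unfolding tau_def using ff_img by (metis f_inv_into_f)

lemma tau_ff: "x \<in> {0..cc} \<Longrightarrow> tau (ff x) = x"
  unfolding tau_def using ff_inj by (metis inv_into_f_f)

lemma tau0: "tau 0 = cc" using tau_ff[of cc] ffc cc_bounds by simp
lemma tau1: "tau 1 = 0" using tau_ff[of 0] ff0 cc_bounds by simp

lemma tau_mono: assumes "x \<in> {0..1}" "y \<in> {0..1}" "x \<le> y" shows "tau y \<le> tau x"
proof (rule ccontr)
  assume "\<not> tau y \<le> tau x"
  then have "ff (tau y) < ff (tau x)" using tau_in assms by (intro ff_strict) auto
  then show False using ff_tau assms by auto
qed

lemma tau_cont: "continuous_on {0..1} tau"
  using continuous_on_inv[OF ff_cont compact_Icc, of tau] tau_ff ff_img by simp

lemma tau_open: assumes "y \<in> {0<..<1}" shows "tau y \<in> {0<..<cc}"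
proof -
  have "tau y \<in> {0..cc}" using assms tau_in by auto
  moreover have "tau y \<noteq> 0" using ff_tau[of y] ff0 assms by auto
  moreover have "tau y \<noteq> cc" using ff_tau[of y] ffc assms by auto
  ultimately show ?thesis by auto
qed

lemma tau_deriv: assumes "y \<in> {0<..<1}"
  shows "(tau has_real_derivative inverse (fd (tau y))) (at y)"
proof (rule DERIV_inverse_function[where f = ff and a = 0 and b = 1])
  have t: "tau y \<in> {0<..<cc}" using tau_open assms by auto
  show "(ff has_real_derivative fd (tau y)) (at (tau y))" using t cc_bounds by (intro ff_deriv) auto
  show "fd (tau y) \<noteq> 0" using fd_neg[of "tau y"] t cc_bounds by auto
  show "0 < y" "y < 1" using assms by auto
  show "ff (tau z) = z" if "0 < z" "z < 1" for z using ff_tau that by auto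
  show "isCont tau y" using continuous_on_interior[OF tau_cont, of y] assms by simp
qed
lemma algG: fixes s A B :: real assumes s: "s * s = 2" and B: "B = s - A" and nz: "A \<noteq> 0" "B \<noteq> 0"
  shows "1 + 1/(s*A) - 1/(s*B) = (1 - A*A)/(A*B)"
proof -
  have s0: "s \<noteq> 0" using s by auto
  have "1 + 1/(s*A) - 1/(s*B) = (s*A*B + B - A)/(s*A*B)" using nz s0 by (simp add: field_simps)
  also have "s*A*B + B - A = s*(1 - A*A)"
  proof -
    have "s*A*B + B - A = (s * s)*A - s*A*A + s - 2*A" unfolding B by (simp add: algebra_simps)
    also have "\<dots> = s*(1 - A*A)" unfolding s by (simp add: algebra_simps)
    finally show ?thesis .
  qed
  also have "s*(1 - A*A)/(s*A*B) = (1 - A*A)/(A*B)" using s0 by simp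
  finally show ?thesis .
qed
lemma algPhi: fixes s L c :: real assumes s: "s * s = 2" and "c = 2 - s"
  shows "-(1-c)*L - c + L/s + ((2+s-L)/2)*c = 1 - c"
proof -
  have s0: "s \<noteq> 0" using s by auto
  show ?thesis using s0
    apply (simp add: field_simps)
    unfolding assms(2) using s by algebra
qed
lemma e1: "exp (-1) < sqrt 2 - (1::real)"
proof -
  have "1 + 1 + 1^2/2 \<le> exp (1::real)" using exp_lower_Taylor_quadratic[of 1] by simp
  then have "exp (-1) \<le> 1 / (5/2::real)" by (simp add: exp_minus field_simps)
  moreover have "1.41 < sqrt (2::real)" by (rule real_less_rsqrt) (simp add: power2_eq_square)
  ultimately show ?thesis by simp
qed



lemma G_id: assumes "t \<in> {0<..<cc}" shows "1 - ff t + ff (cc - t) = t*(2-t)/((1-t)*(1-cc+t))"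
proof -
  have p: "1 - t > 0" "1 - cc + t > 0" using assms cc_bounds by auto
  have l1: "ln (1 - (cc - t)) = ln (1 - cc + t)" by (simp add: algebra_simps)
  have l2: "ln (1 - cc + (cc - t)) = ln (1 - t)" by simp
  have m1: "sqrt 2 * (t - 1) = - (sqrt 2 * (1 - t))" "sqrt 2 * (cc - t - 1) = - (sqrt 2 * (1 - cc + t))"
    by (simp_all add: algebra_simps)
  have "1 - ff t + ff (cc - t) = 1 - (1/(sqrt 2*(t-1)) - 1/(sqrt 2*(cc-t-1)))"
    unfolding ff_def l1 l2 by (simp add: algebra_simps)
  also have "\<dots> = 1 + 1/(sqrt 2*(1-t)) - 1/(sqrt 2*(1-cc+t))" unfolding m1 by simp
  also have "\<dots> = (1 - (1-t)*(1-t))/((1-t)*(1-cc+t))"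
    using p by (intro algG) (auto simp: cc_def)
  also have "1 - (1-t)*(1-t) = t*(2-t)" by (simp add: algebra_simps)
  finally show ?thesis .
qed

lemma den_eq: assumes "y \<in> {0<..<1}" shows "1 - y + hh y = tau y*(2-tau y)/((1-tau y)*(1-cc+tau y))"
proof -
  have t: "tau y \<in> {0<..<cc}" using tau_open assms by auto
  have "1 - y + hh y = 1 - ff (tau y) + ff (cc - tau y)" unfolding hh_def using ff_tau assms by simp
  also have "\<dots> = tau y*(2-tau y)/((1-tau y)*(1-cc+tau y))" using G_id[OF t] .
  finally show ?thesis .
qed

lemma fdi: assumes "0 < t" "t < cc" shows "- inverse (fd t) = (1-t)^2*(1-cc+t)/(t*(2-t))"
proof -
  have "1 - t > 0" "1 - cc + t > 0" "2 - t > 0" using assms cc_bounds by auto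
  then show ?thesis unfolding fd_def using assms by (simp add: field_simps)
qed

lemma int1_eq: assumes "y \<in> {0<..<1}" shows "(1 - tau y)/(1 - y + hh y) = - inverse (fd (tau y))"
proof -
  define t where "t = tau y"
  have t: "0 < t" "t < cc" using tau_open assms t_def by auto
  then have "1 - t > 0" "1 - cc + t > 0" "2 - t > 0" using cc_bounds by auto
  then show ?thesis unfolding den_eq[OF assms] t_def[symmetric] fdi[OF t] using t
    by (simp add: field_simps power2_eq_square)
qed

lemma int3_eq: assumes "y \<in> {0<..<1}" shows "1/(1 - y + hh y) = - inverse (fd (tau y)) / (1 - tau y)"
proof -
  define t where "t = tau y"
  have t: "0 < t" "t < cc" using tau_open assms t_def by auto
  then have nz: "1 - t \<noteq> 0" "t*(2-t) \<noteq> 0" using cc_bounds by auto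
  have A: "1/(t*(2-t)/((1-t)*(1-cc+t))) = (1-t)*(1-cc+t)/(t*(2-t))" by simp
  have B: "(1-t)^2*(1-cc+t)/(t*(2-t))/(1-t) = (1-t)*(1-cc+t)/(t*(2-t))"
    using nz by (simp add: power2_eq_square)
  show ?thesis unfolding den_eq[OF assms] t_def[symmetric] fdi[OF t] A B ..
qed

lemma part1: assumes "x \<in> {0..1}"
  shows "((\<lambda>y. (1 - tau y)/(1 - y + hh y)) has_integral (cc - tau x)) {0..x}"
proof -
  have "((\<lambda>y. (1 - tau y)/(1 - y + hh y)) has_integral ((\<lambda>y. - tau y) x - (\<lambda>y. - tau y) 0)) {0..x}"
  proof (rule fundamental_theorem_of_calculus_interior)
    show "0 \<le> x" using assms by auto
    have "continuous_on {0..x} tau" by (rule continuous_on_subset[OF tau_cont]) (use assms in auto)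
    then show "continuous_on {0..x} (\<lambda>y. - tau y)" by (rule continuous_on_minus)
    fix y assume y: "y \<in> {0<..<x}"
    then have y1: "y \<in> {0<..<1}" using assms by auto
    have "((\<lambda>y. - tau y) has_real_derivative - inverse (fd (tau y))) (at y)"
      using tau_deriv[OF y1] by (rule DERIV_minus)
    then show "((\<lambda>y. - tau y) has_vector_derivative (1 - tau y)/(1 - y + hh y)) (at y)"
      using int1_eq[OF y1] by (simp add: has_real_derivative_iff_has_vector_derivative)
  qed
  then show ?thesis using tau0 by simp
qed

definition Phi :: "real \<Rightarrow> real" where
  "Phi t = ((-(1-t)*ln(1-t) - t) + ((1-cc+t)*ln(1-cc+t) - t))/2 + ln(1-t)/sqrt 2
     + ((2 + sqrt 2 - ln(1-cc))/2)*t"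

lemma Phi_deriv: assumes "cc - 1 < t" "t < 1" shows "(Phi has_real_derivative ff t) (at t)"
proof -
  have p1: "1 - t > 0" and p2: "1 - cc + t > 0" using assms by auto
  have "(t - 1)/(1 - t) = (-(1 - t))/(1 - t)" by simp
  also have "\<dots> = -1" by (subst divide_minus_left) (use p1 in simp)
  finally have q: "(t - 1)/(1 - t) = -1" .
  have a: "((\<lambda>t. -(1-t)*ln(1-t) - t) has_real_derivative ln(1-t)) (at t)"
    using p1 q by (auto intro!: derivative_eq_intros)
  have b: "((\<lambda>t. (1-cc+t)*ln(1-cc+t) - t) has_real_derivative ln(1-cc+t)) (at t)"
    using p2 by (auto intro!: derivative_eq_intros)
  have c: "((\<lambda>t. ln(1-t)/sqrt 2) has_real_derivative 1/(sqrt 2*(t-1))) (at t)"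
  proof -
    have "(t - 1)/(1 - t) = (-(1 - t))/(1 - t)" by simp
    also have "\<dots> = -1" by (subst divide_minus_left) (use p1 in simp)
    finally have q: "(t - 1)/(1 - t) = -1" .
    show ?thesis using p1 q by (auto intro!: derivative_eq_intros simp: field_simps)
  qed
  have d: "((\<lambda>t. ((2 + sqrt 2 - ln(1-cc))/2)*t) has_real_derivative ((2 + sqrt 2 - ln(1-cc))/2)) (at t)"
    by (auto intro!: derivative_eq_intros)
  show ?thesis unfolding Phi_def[abs_def] ff_def
    by (intro DERIV_add DERIV_cdivide a b c d)
qed

lemma Phi_cont: "continuous_on {0..cc} Phi"
proof (rule continuous_at_imp_continuous_on, rule ballI)
  fix x assume "x \<in> {0..cc}"
  then have "(Phi has_real_derivative ff x) (at x)" using cc_bounds by (intro Phi_deriv) auto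
  then show "isCont Phi x" by (rule DERIV_isCont)
qed

lemma Phi_diff: "Phi cc - Phi 0 = 1 - cc"
proof -
  define L where "L = ln (1 - cc)"
  have "Phi cc - Phi 0 = -(1-cc)*L - cc + L/sqrt 2 + ((2+sqrt 2-L)/2)*cc"
    unfolding Phi_def by (simp add: L_def algebra_simps add_divide_distrib diff_divide_distrib)
  also have "\<dots> = 1 - cc" using algPhi[of "sqrt 2" cc L] cc_def by simp
  finally show ?thesis .
qed

lemma part2: "(tau has_integral (1 - cc)) {0..1}"
proof -
  define G where "G y = y * tau y - Phi (tau y)" for y
  have "(tau has_integral (G 1 - G 0)) {0..1}"
  proof (rule fundamental_theorem_of_calculus_interior)
    show "0 \<le> (1::real)" by simp
    have "continuous_on {0..1} (\<lambda>y. Phi (tau y))"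
      using tau_in by (intro continuous_on_compose2[OF Phi_cont tau_cont]) auto
    then show "continuous_on {0..1} G" unfolding G_def[abs_def]
      by (intro continuous_intros tau_cont)
    fix y :: real assume y: "y \<in> {0<..<1}"
    have t: "tau y \<in> {0<..<cc}" using tau_open y by auto
    have dP: "(Phi has_real_derivative ff (tau y)) (at (tau y))"
      using t cc_bounds by (intro Phi_deriv) auto
    have "(G has_real_derivative (1 * tau y + inverse (fd (tau y)) * y - ff (tau y) * inverse (fd (tau y)))) (at y)"
      unfolding G_def[abs_def]
      by (intro DERIV_diff DERIV_mult DERIV_ident tau_deriv[OF y] DERIV_chain2[where f=Phi and g=tau, OF dP])
    moreover have "ff (tau y) = y" using ff_tau y by auto
    ultimately show "(G has_vector_derivative tau y) (at y)"
      by (simp add: has_real_derivative_iff_has_vector_derivative mult.commute)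
  qed
  moreover have "G 1 - G 0 = 1 - cc" unfolding G_def using tau0 tau1 Phi_diff by simp
  ultimately show ?thesis by simp
qed

lemma part3: "((\<lambda>y. 1/(1 - y + hh y)) has_integral (- ln (1 - cc))) {0..1}"
proof -
  define H where "H y = ln (1 - tau y)" for y
  have "((\<lambda>y. 1/(1 - y + hh y)) has_integral (H 1 - H 0)) {0..1}"
  proof (rule fundamental_theorem_of_calculus_interior)
    show "0 \<le> (1::real)" by simp
    have "\<forall>y\<in>{0..1}. 1 - tau y \<noteq> 0" using tau_in cc_bounds by fastforce
    then show "continuous_on {0..1} H" unfolding H_def[abs_def]
      by (intro continuous_on_ln continuous_intros tau_cont)
    fix y :: real assume y: "y \<in> {0<..<1}"
    have t: "tau y \<in> {0<..<cc}" using tau_open y by auto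
    then have pos: "0 < 1 - tau y" using cc_bounds by auto
    have "(H has_real_derivative (1 / (1 - tau y)) * (0 - inverse (fd (tau y)))) (at y)"
      unfolding H_def[abs_def]
      by (rule DERIV_chain2[where f=ln and g="\<lambda>y. 1 - tau y", OF DERIV_ln_divide[OF pos]]) (intro DERIV_diff DERIV_const tau_deriv[OF y])
    then show "(H has_vector_derivative 1/(1 - y + hh y)) (at y)"
      using int3_eq[OF y] by (simp add: has_real_derivative_iff_has_vector_derivative)
  qed
  moreover have "H 1 - H 0 = - ln (1 - cc)" unfolding H_def using tau0 tau1 by simp
  ultimately show ?thesis by simp
qed

lemma part3b: "- ln (1 - cc) < 1"
proof -
  have "ln (exp (-1)) < ln (1 - cc)" using e1 cc_bounds
    by (subst ln_less_cancel_iff) auto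
  then show ?thesis by simp
qed

lemma ff_mono: "0 \<le> a \<Longrightarrow> a \<le> b \<Longrightarrow> b \<le> cc \<Longrightarrow> ff b \<le> ff a"
  using ff_strict[of a b] by (cases "a = b") auto

lemma hh_in: "y \<in> {0..1} \<Longrightarrow> hh y \<in> {0..1}"
proof -
  assume y: "y \<in> {0..1}"
  then have "cc - tau y \<in> {0..cc}" using tau_in[OF y] by auto
  then show "hh y \<in> {0..1}" unfolding hh_def using ff_img by blast
qed

theorem lemma3p2:
  shows "(\<forall>x\<in>{0..cc}. \<forall>y\<in>{0..cc}. x < y \<longrightarrow> ff y < ff x)
    \<and> bij_betw ff {0..cc} {0..1}
    \<and> ff 0 = 1 \<and> ff cc = 0
    \<and> (\<forall>x\<in>{0..1}. \<forall>y\<in>{0..1}. x \<le> y \<longrightarrow> hh y \<le> hh x)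
    \<and> hh ` {0..1} \<subseteq> {0..1} \<and> hh 0 = 1 \<and> hh 1 = 0
    \<and> (\<forall>x\<in>{0..1::real}.
          (\<lambda>y. (1 - tau y) / (1 - y + hh y)) integrable_on {0..x}
          \<and> integral {0..x} (\<lambda>y. (1 - tau y) / (1 - y + hh y)) = cc - tau x)
    \<and> tau integrable_on {0..1} \<and> integral {0..1} tau = 1 - cc
    \<and> (\<lambda>y. 1 / (1 - y + hh y)) integrable_on {0..1}
    \<and> integral {0..1} (\<lambda>y. 1 / (1 - y + hh y)) < 1"
  proof -
  have A: "\<forall>x\<in>{0..cc}. \<forall>y\<in>{0..cc}. x < y \<longrightarrow> ff y < ff x" by (auto intro: ff_strict)
  have B: "\<forall>x\<in>{0..1}. \<forall>y\<in>{0..1}. x \<le> y \<longrightarrow> hh y \<le> hh x"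
  proof (intro ballI impI)
    fix x y :: real assume xy: "x \<in> {0..1}" "y \<in> {0..1}" "x \<le> y"
    have "tau y \<le> tau x" using tau_mono xy by auto
    moreover have "tau x \<in> {0..cc}" "tau y \<in> {0..cc}" using tau_in xy by auto
    ultimately show "hh y \<le> hh x" unfolding hh_def by (intro ff_mono) auto
  qed
  have C: "hh ` {0..1} \<subseteq> {0..1}" using hh_in by auto
  have D: "hh 0 = 1" "hh 1 = 0" unfolding hh_def using tau0 tau1 ff0 ffc by auto
  have E: "\<forall>x\<in>{0..1::real}.
          (\<lambda>y. (1 - tau y) / (1 - y + hh y)) integrable_on {0..x}
          \<and> integral {0..x} (\<lambda>y. (1 - tau y) / (1 - y + hh y)) = cc - tau x"
  proof
    fix x :: real assume x: "x \<in> {0..1}"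
    show "(\<lambda>y. (1 - tau y) / (1 - y + hh y)) integrable_on {0..x}
          \<and> integral {0..x} (\<lambda>y. (1 - tau y) / (1 - y + hh y)) = cc - tau x"
      using part1[OF x] by (auto intro: has_integral_integrable integral_unique)
  qed
  have F: "tau integrable_on {0..1}" "integral {0..1} tau = 1 - cc"
    using part2 by (auto intro: has_integral_integrable integral_unique)
  have G: "(\<lambda>y. 1 / (1 - y + hh y)) integrable_on {0..1}"
    "integral {0..1} (\<lambda>y. 1 / (1 - y + hh y)) < 1"
    using part3 part3b integral_unique[OF part3] by (auto intro: has_integral_integrable)
  show ?thesis using A B C D E F G ff_bij ff0 ffc by blast
qed

end
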